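(* Let $m,n\in\mathbb N$. Then for all Banach spaces $X,Y$ and all bounded linear operators $T:X\to Y$, $$\tau(T|\mathcal H(\mathbb D_{m+1}^{m+n}))\le\tau(T|\mathcal H(\mathbb D_1^n)).$$
   Context: Dyadic intervals: $\Delta_k^{(j)}:=[\frac{j-1}{2^k},\frac{j}{2^k})$. Haar functions: for $k\ge1$, integer $j$, $\chi_k^{(j)}(t)=+2^{(k-1)/2}$ on $\Delta_k^{(2j-1)}$, $-2^{(k-1)/2}$ on $\Delta_k^{(2j)}$, $0$ otherwise, $t\in[0,1)$. $\mathbb D_m^n:=\{(k,j):k=m,\dots,n;\ j=1,\dots,2^{k-1}\}$. For a finite set $\mathbb F$ of such indices and bounded linear $T:X\to Y$, $\tau(T|\mathcal H(\mathbb F))$ is the least $c\ge0$ such that $\|\sum_{(k,j)\in\mathbb F}Tx_k^{(j)}\chi_k^{(j)}|L_2\|\le c(\sum_{(k,j)\in\mathbb F}\|x_k^{(j)}\|^2)^{1/2}$ for all $x_k^{(j)}\in X$, where $\|\cdot|L_2\|$ is the Bochner $L_2([0,1),Y)$ norm. *)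

theory Defs
  imports "HOL-Analysis.Analysis"
begin

definition dyadic_interval :: "nat \<Rightarrow> int \<Rightarrow> real set" where
  "dyadic_interval k j = {real_of_int (j - 1) / 2 ^ k ..< real_of_int j / 2 ^ k}"

definition haar :: "nat \<Rightarrow> int \<Rightarrow> real \<Rightarrow> real" where
  "haar k j t =
     (if t \<in> {0..<1} \<and> t \<in> dyadic_interval k (2 * j - 1) then 2 powr ((real k - 1) / 2)
      else if t \<in> {0..<1} \<and> t \<in> dyadic_interval k (2 * j) then - (2 powr ((real k - 1) / 2))
      else 0)"

definition dyadic_index :: "nat \<Rightarrow> nat \<Rightarrow> (nat \<times> int) set" where
  "dyadic_index m n = {(k, j). m \<le> k \<and> k \<le> n \<and> 1 \<le> j \<and> j \<le> 2 ^ (k - 1)}"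

definition L2_norm01 :: "(real \<Rightarrow> 'b::real_normed_vector) \<Rightarrow> real" where
  "L2_norm01 f = sqrt (LINT t : {0..<1} | lborel. (norm (f t))\<^sup>2)"

definition haar_tau ::
  "('a::real_normed_vector \<Rightarrow> 'b::real_normed_vector) \<Rightarrow> (nat \<times> int) set \<Rightarrow> real" where
  "haar_tau T F = Inf {c. c \<ge> 0 \<and>
     (\<forall>x :: nat \<times> int \<Rightarrow> 'a.
        L2_norm01 (\<lambda>t. \<Sum>(k, j)\<in>F. haar k j t *\<^sub>R T (x (k, j)))
          \<le> c * sqrt (\<Sum>(k, j)\<in>F. (norm (x (k, j)))\<^sup>2))}"

end

theory Submission
  imports Defs
begin


lemma floor_pow_div:
  fixes x :: real
  assumes "k \<le> N"
  shows "\<lfloor>2^k * x\<rfloor> = \<lfloor>2^N * x\<rfloor> div 2^(N-k)"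
proof -
  have "(2::real)^N = 2^k * 2^(N-k)" using assms by (simp add: power_add[symmetric])
  hence "2^k * x = (2^N * x) / real_of_int (2^(N-k))" by simp
  thus ?thesis using floor_divide_real_eq_div[of "2^(N-k)" "2^N * x"] by simp
qed

lemma mem_DI: "t \<in> dyadic_interval k q \<longleftrightarrow> \<lfloor>2^k * t\<rfloor> = q - 1"
proof -
  have p: "(0::real) < 2^k" by simp
  have "t \<in> dyadic_interval k q \<longleftrightarrow> real_of_int (q-1) \<le> 2^k * t \<and> 2^k * t < real_of_int q"
    unfolding dyadic_interval_def using p
    by (simp add: pos_divide_le_eq pos_less_divide_eq mult.commute)
  also have "\<dots> \<longleftrightarrow> \<lfloor>2^k * t\<rfloor> = q - 1" by (simp add: floor_eq_iff)
  finally show ?thesis .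
qed

lemma mem_01: "t \<in> {0..<1} \<longleftrightarrow> \<lfloor>t\<rfloor> = (0::int)"
  by (auto simp: floor_eq_iff)

lemma haar_alt: "haar k j t =
  (if \<lfloor>t\<rfloor> = 0 \<and> \<lfloor>2^k * t\<rfloor> = 2*j-2 then 2 powr ((real k - 1) / 2)
   else if \<lfloor>t\<rfloor> = 0 \<and> \<lfloor>2^k * t\<rfloor> = 2*j-1 then - (2 powr ((real k - 1) / 2)) else 0)"
  unfolding haar_def mem_DI mem_01 by (simp add: algebra_simps)

lemma haar_zero: "t \<notin> {0..<1} \<Longrightarrow> haar k j t = 0"
  unfolding haar_def by auto

lemma haar_abs: "\<bar>haar k j t\<bar> \<le> 2 powr ((real k - 1) / 2)"
  unfolding haar_def by simp

lemma haar_floor: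
  assumes "k \<le> N"
  shows "haar k j t = haar k j (real_of_int \<lfloor>2^N * t\<rfloor> / 2^N)"
proof -
  define s where "s = real_of_int \<lfloor>2^N * t\<rfloor> / 2^N"
  have e: "\<lfloor>2^N * s\<rfloor> = \<lfloor>2^N * t\<rfloor>" unfolding s_def by simp
  have "\<lfloor>2^k * t\<rfloor> = \<lfloor>2^k * s\<rfloor>" using floor_pow_div[OF assms, of t] floor_pow_div[OF assms, of s] e by simp
  moreover have "\<lfloor>t\<rfloor> = \<lfloor>s\<rfloor>" using floor_pow_div[of 0 N t] floor_pow_div[of 0 N s] e by simp
  ultimately show ?thesis unfolding haar_alt s_def by simp
qed

lemma aux_lin: "(F::int) = a + b \<Longrightarrow> 0 \<le> a \<and> a < P \<Longrightarrow> 0 \<le> b \<Longrightarrow> b + P \<le> Q \<Longrightarrow> 0 \<le> F \<and> F < Q"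
  by linarith

lemma haar_scale:
  fixes i j :: int and k m :: nat
  assumes k: "1 \<le> k" and i: "0 \<le> i" "i < 2^m" and j: "1 \<le> j" "j \<le> 2^(k-1)"
  shows "haar (m+k) (i*2^(k-1)+j) t = 2 powr (real m / 2) * haar k j (2^m*t - real_of_int i)"
proof -
  define s where "s = 2^m*t - real_of_int i"
  have kk: "(2::int)^k = 2 * 2^(k-1)" using k by (metis Suc_diff_le diff_Suc_1 power_Suc)
  have "(2::real)^(m+k) * t = 2^k * s + real_of_int (i * 2^k)"
    unfolding s_def by (simp add: power_add algebra_simps)
  hence fl: "\<lfloor>2^(m+k) * t\<rfloor> = \<lfloor>2^k * s\<rfloor> + i * 2^k"
    by (metis floor_add_int)
  have c1: "\<lfloor>2^(m+k) * t\<rfloor> = 2*(i*2^(k-1)+j)-2 \<longleftrightarrow> \<lfloor>2^k * s\<rfloor> = 2*j-2"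
    using fl kk by (simp add: algebra_simps)
  have c2: "\<lfloor>2^(m+k) * t\<rfloor> = 2*(i*2^(k-1)+j)-1 \<longleftrightarrow> \<lfloor>2^k * s\<rfloor> = 2*j-1"
    using fl kk by (simp add: algebra_simps)
  have im: "i * 2^k \<le> (2^m - 1) * 2^k" using i by (intro mult_right_mono) auto
  have mk: "(2::int)^(m+k) = 2^m * 2^k" by (simp add: power_add)
  have fz: "\<lfloor>x\<rfloor> = 0" if "0 \<le> \<lfloor>2^K * x\<rfloor>" "\<lfloor>2^K * x\<rfloor> < 2^K" for x :: real and K
    using floor_pow_div[of 0 K x] that by simp
  have s0: "\<lfloor>s\<rfloor> = 0" if "\<lfloor>2^k * s\<rfloor> = 2*j-2 \<or> \<lfloor>2^k * s\<rfloor> = 2*j-1"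
  proof -
    have h: "0 \<le> \<lfloor>2^k * s\<rfloor> \<and> \<lfloor>2^k * s\<rfloor> < 2^k" using that j kk by linarith
    show ?thesis by (rule fz[OF conjunct1[OF h] conjunct2[OF h]])
  qed
  have t0: "\<lfloor>t\<rfloor> = 0" if "\<lfloor>2^k * s\<rfloor> = 2*j-2 \<or> \<lfloor>2^k * s\<rfloor> = 2*j-1"
  proof -
    have im': "i * 2^k + 2^k \<le> 2^m * 2^k" using im by (simp add: algebra_simps)
    have i0: "0 \<le> i * 2^k" using i by simp
    have "0 \<le> \<lfloor>2^k * s\<rfloor> \<and> \<lfloor>2^k * s\<rfloor> < 2^k" using that j kk by linarith
    hence h: "0 \<le> \<lfloor>2^(m+k) * t\<rfloor> \<and> \<lfloor>2^(m+k) * t\<rfloor> < 2^(m+k)"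
      unfolding mk by (rule aux_lin[OF fl _ i0 im'])
    show ?thesis by (rule fz[OF conjunct1[OF h] conjunct2[OF h]])
  qed
  have pw: "(2::real) powr ((real (m+k) - 1) / 2) = 2 powr (real m / 2) * 2 powr ((real k - 1) / 2)"
    by (simp add: powr_add[symmetric] add_divide_distrib[symmetric] algebra_simps)
  show ?thesis
  proof (cases "\<lfloor>2^k * s\<rfloor> = 2*j-2")
    case True
    then show ?thesis unfolding haar_alt s_def[symmetric] c1 c2 pw using s0 t0 by simp
  next
    case F1: False
    show ?thesis
    proof (cases "\<lfloor>2^k * s\<rfloor> = 2*j-1")
      case True
      then show ?thesis unfolding haar_alt s_def[symmetric] c1 c2 pw using s0 t0 F1 by simp
    next
      case False
      then show ?thesis unfolding haar_alt s_def[symmetric] c1 c2 pw using F1 by simp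
    qed
  qed
qed


definition hs :: "(nat \<times> int) set \<Rightarrow> (nat \<times> int \<Rightarrow> 'b::real_normed_vector) \<Rightarrow> real \<Rightarrow> 'b" where
  "hs F v t = (\<Sum>(k, j)\<in>F. haar k j t *\<^sub>R v (k, j))"

lemma hs_zero: "t \<notin> {0..<1} \<Longrightarrow> hs F v t = 0"
  unfolding hs_def by (simp add: haar_zero)

lemma hs_bound:
  "norm (hs F v t) \<le> indicator {0..<1} t * (\<Sum>(k, j)\<in>F. 2 powr ((real k - 1) / 2) * norm (v (k, j)))"
proof (cases "t \<in> {0..<1}")
  case True
  have "norm (hs F v t) \<le> (\<Sum>(k, j)\<in>F. norm (haar k j t *\<^sub>R v (k, j)))"
    unfolding hs_def by (rule norm_sum[THEN order_trans]) (simp add: case_prod_beta)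
  also have "\<dots> \<le> (\<Sum>(k, j)\<in>F. 2 powr ((real k - 1) / 2) * norm (v (k, j)))"
    by (rule sum_mono) (auto simp: case_prod_beta intro: mult_right_mono haar_abs)
  finally show ?thesis using True by simp
next
  case False
  then show ?thesis by (simp add: hs_zero)
qed

lemma hs_floor:
  assumes "\<And>k j. (k, j) \<in> F \<Longrightarrow> k \<le> N"
  shows "hs F v t = hs F v (real_of_int \<lfloor>2^N * t\<rfloor> / 2^N)"
  unfolding hs_def
proof (rule sum.cong[OF refl])
  fix p assume "p \<in> F"
  then obtain k j where p: "p = (k, j)" "(k, j) \<in> F" by (cases p) auto
  show "(case p of (k, j) \<Rightarrow> haar k j t *\<^sub>R v (k, j)) =
    (case p of (k, j) \<Rightarrow> haar k j (real_of_int \<lfloor>2 ^ N * t\<rfloor> / 2 ^ N) *\<^sub>R v (k, j))"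
    using haar_floor[OF assms[OF p(2)], of j t] p(1) by simp
qed

lemma hs_measurable:
  fixes v :: "nat \<times> int \<Rightarrow> 'b::real_normed_vector"
  assumes N: "\<And>k j. (k, j) \<in> F \<Longrightarrow> k \<le> N"
  shows "(\<lambda>t. (norm (hs F v t))\<^sup>2) \<in> borel_measurable lborel"
proof -
  define \<Phi> where "\<Phi> p = (norm (hs F v (real_of_int p / 2^N)))\<^sup>2" for p :: int
  have e: "(\<lambda>t. (norm (hs F v t))\<^sup>2) = (\<lambda>t. \<Phi> \<lfloor>2^N * t\<rfloor>)"
  proof (rule ext)
    fix t
    have "hs F v t = hs F v (real_of_int \<lfloor>2^N * t\<rfloor> / 2^N)" by (rule hs_floor) (use N in blast)
    then show "(norm (hs F v t))\<^sup>2 = \<Phi> \<lfloor>2^N * t\<rfloor>" unfolding \<Phi>_def by simp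
  qed
  have m1: "(\<lambda>t::real. \<lfloor>2^N * t\<rfloor>) \<in> measurable lborel (count_space UNIV)"
    by measurable
  have m2: "\<Phi> \<in> measurable (count_space UNIV) borel" by simp
  show ?thesis unfolding e using measurable_compose[OF m1 m2] .
qed

lemma hs_integrable:
  fixes v :: "nat \<times> int \<Rightarrow> 'b::real_normed_vector"
  assumes N: "\<And>k j. (k, j) \<in> F \<Longrightarrow> k \<le> N"
  shows "integrable lborel (\<lambda>t. (norm (hs F v t))\<^sup>2)"
proof -
  define C where "C = (\<Sum>(k, j)\<in>F. 2 powr ((real k - 1) / 2) * norm (v (k, j)))"
  have I: "integrable lborel (\<lambda>t. indicator {0..<1::real} t *\<^sub>R C\<^sup>2)"
    by (rule integrable_indicator) auto
  have B: "norm ((norm (hs F v t))\<^sup>2) \<le> norm (indicator {0..<1::real} t *\<^sub>R C\<^sup>2)" for t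
  proof -
    have b: "norm (hs F v t) \<le> indicator {0..<1} t * C" using hs_bound unfolding C_def .
    have "(norm (hs F v t))\<^sup>2 \<le> (indicator {0..<1} t * C)\<^sup>2"
      by (rule power_mono[OF b]) simp
    also have "\<dots> = indicator {0..<1::real} t * C\<^sup>2" by (simp add: indicator_def power2_eq_square)
    finally show ?thesis by (simp add: indicator_def)
  qed
  have M: "(\<lambda>t. (norm (hs F v t))\<^sup>2) \<in> borel_measurable lborel"
    by (rule hs_measurable) (use N in blast)
  show ?thesis
    by (rule Bochner_Integration.integrable_bound[OF I M]) (rule AE_I2, rule B)
qed

lemma L2_hs: "L2_norm01 (hs F v) = sqrt (\<integral>t. (norm (hs F v t))\<^sup>2 \<partial>lborel)"
proof -
  have "(\<lambda>t. indicator {0..<1::real} t *\<^sub>R (norm (hs F v t))\<^sup>2) = (\<lambda>t. (norm (hs F v t))\<^sup>2)"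
  proof (rule ext)
    fix t :: real
    show "indicator {0..<1::real} t *\<^sub>R (norm (hs F v t))\<^sup>2 = (norm (hs F v t))\<^sup>2"
      by (cases "t \<in> {0..<1}") (simp_all add: hs_zero)
  qed
  thus ?thesis unfolding L2_norm01_def set_lebesgue_integral_def by simp
qed

lemma norm_sum_disj:
  fixes G :: "'i \<Rightarrow> 'b::real_normed_vector"
  assumes "finite A" "\<And>i l. i \<in> A \<Longrightarrow> l \<in> A \<Longrightarrow> G i \<noteq> 0 \<Longrightarrow> G l \<noteq> 0 \<Longrightarrow> i = l"
  shows "(norm (sum G A))\<^sup>2 = (\<Sum>i\<in>A. (norm (G i))\<^sup>2)"
proof (cases "\<exists>i\<in>A. G i \<noteq> 0")
  case True
  then obtain i where i: "i \<in> A" "G i \<noteq> 0" by blast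
  have z: "\<And>l. l \<in> A - {i} \<Longrightarrow> G l = 0" using assms(2) i by blast
  have "sum G A = G i + sum G (A - {i})" using assms(1) i by (simp add: sum.remove)
  also have "sum G (A - {i}) = 0" using z by simp
  finally have 1: "sum G A = G i" by simp
  have "(\<Sum>i\<in>A. (norm (G i))\<^sup>2) = (norm (G i))\<^sup>2 + (\<Sum>l\<in>A - {i}. (norm (G l))\<^sup>2)"
    using assms(1) i by (simp add: sum.remove)
  also have "(\<Sum>l\<in>A - {i}. (norm (G l))\<^sup>2) = 0" using z by simp
  finally show ?thesis using 1 by simp
next
  case False
  then show ?thesis by simp
qed


lemma dyadic_index_finite: "finite (dyadic_index a b)"
proof -
  have "dyadic_index a b \<subseteq> {a..b} \<times> {1..2^(b-1)}"
  proof
    fix p assume "p \<in> dyadic_index a b"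
    then obtain k j where p: "p = (k, j)" "a \<le> k" "k \<le> b" "1 \<le> j" "j \<le> 2^(k-1)"
      unfolding dyadic_index_def by auto
    have h: "(2::int)^(k-1) \<le> 2^(b-1)" by (rule power_increasing) (use p in auto)
    have "j \<le> 2^(b-1)" using p(5) h by linarith
    thus "p \<in> {a..b} \<times> {1..2^(b-1)}" using p by auto
  qed
  thus ?thesis by (rule finite_subset) auto
qed

definition phi :: "nat \<Rightarrow> int \<times> nat \<times> int \<Rightarrow> nat \<times> int" where
  "phi m q = (m + fst (snd q), fst q * 2^(fst (snd q) - 1) + snd (snd q))"

definition psi :: "nat \<Rightarrow> nat \<times> int \<Rightarrow> int \<times> nat \<times> int" where
  "psi m p = ((snd p - 1) div 2^(fst p - m - 1), (fst p - m, (snd p - 1) mod 2^(fst p - m - 1) + 1))"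

lemma phi_psi_1:
  assumes q: "q \<in> {0..<2^m::int} \<times> dyadic_index 1 n"
  shows "psi m (phi m q) = q \<and> phi m q \<in> dyadic_index (m+1) (m+n)"
proof -
  obtain i k j where qq: "q = (i, (k, j))" by (cases q) auto
  have i: "0 \<le> i" "i < 2^m" and k: "1 \<le> k" "k \<le> n" and j: "1 \<le> j" "j \<le> 2^(k-1)"
    using q unfolding qq dyadic_index_def by auto
  define P :: int where "P = 2^(k-1)"
  have P: "0 < P" unfolding P_def by simp
  have jj: "0 \<le> j - 1" "j - 1 < P" using j unfolding P_def by auto
  have e: "i * P + j - 1 = (j - 1) + i * P" by simp
  have d: "(i * P + j - 1) div P = i" unfolding e using jj P by simp
  have md: "(i * P + j - 1) mod P = j - 1" unfolding e using jj P by simp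
  have kk: "m + k - m - 1 = k - 1" by simp
  have "psi m (phi m q) = ((i*P + j - 1) div P, (k, (i*P+j-1) mod P + 1))"
    unfolding qq phi_def psi_def P_def by simp
  hence 1: "psi m (phi m q) = q" using d md qq by simp
  have im: "i * P \<le> (2^m - 1) * P" using i P by (intro mult_right_mono) auto
  have pk: "(2::int)^(m + k - 1) = 2^m * P" unfolding P_def using k
    by (metis add_diff_assoc power_add)
  have ip: "0 \<le> i * P" using i P by simp
  have m1: "1 \<le> i * P + j" using ip j by linarith
  have im2: "i * P + P \<le> 2^m * P" using im by (simp add: algebra_simps)
  have jP: "j \<le> P" using j unfolding P_def by simp
  have m2: "i * P + j \<le> 2^(m + k - 1)" unfolding pk using im2 jP by linarith
  have 2: "phi m q \<in> dyadic_index (m+1) (m+n)"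
    unfolding qq phi_def dyadic_index_def
    apply (simp only: fst_conv snd_conv)
    apply (unfold P_def[symmetric])
    using k m1 m2 by auto
  show ?thesis using 1 2 by blast
qed

lemma phi_psi_2:
  assumes p: "p \<in> dyadic_index (m+1) (m+n)"
  shows "phi m (psi m p) = p \<and> psi m p \<in> {0..<2^m::int} \<times> dyadic_index 1 n"
proof -
  obtain k j where pp: "p = (k, j)" by (cases p) auto
  have k: "m + 1 \<le> k" "k \<le> m + n" and j: "1 \<le> j" "j \<le> 2^(k-1)"
    using p unfolding pp dyadic_index_def by auto
  define P :: int where "P = 2^(k-m-1)"
  have P: "0 < P" unfolding P_def by simp
  have ke: "k - 1 = m + (k - m - 1)" using k by simp
  have pk: "(2::int)^(k - 1) = 2^m * P" unfolding P_def ke by (rule power_add)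
  have kk: "k - m - 1 = (k - m) - 1" by simp
  have e1: "(j-1) div P * P + ((j-1) mod P + 1) = j" using div_mult_mod_eq[of "j-1" P] by linarith
  have "phi m (psi m p) = (m + (k - m), (j-1) div P * P + ((j - 1) mod P + 1))"
    unfolding pp phi_def psi_def P_def by simp
  hence 1: "phi m (psi m p) = p" using e1 k pp by simp
  have a: "0 \<le> (j - 1) div P" using j P by (simp add: pos_imp_zdiv_nonneg_iff)
  have b: "(j - 1) div P < 2^m"
  proof -
    have lt: "j - 1 < 2^m * P" using j pk by simp
    show ?thesis
    proof (rule ccontr)
      assume "\<not> (j - 1) div P < 2^m"
      hence "2^m \<le> (j - 1) div P" by simp
      hence "2^m * P \<le> (j - 1) div P * P" using P by (intro mult_right_mono) auto
      moreover have "0 \<le> (j - 1) mod P" using P by simp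
      ultimately show False using div_mult_mod_eq[of "j-1" P] lt by linarith
    qed
  qed
  have c: "0 \<le> (j - 1) mod P" "(j - 1) mod P < P" using P by auto
  have pe: "psi m p = ((j-1) div P, (k - m, (j-1) mod P + 1))"
    unfolding pp psi_def P_def by simp
  have "(k - m, (j-1) mod P + 1) \<in> dyadic_index 1 n"
  proof -
    have c2: "(j-1) mod P + 1 \<le> P" "1 \<le> (j-1) mod P + 1" using c by linarith+
    have P3: "(2::int)^(k - Suc m) = P" unfolding P_def by simp
    show ?thesis unfolding dyadic_index_def using c2 k by (simp add: P3, linarith)
  qed
  hence 2: "psi m p \<in> {0..<2^m::int} \<times> dyadic_index 1 n"
    unfolding pe using a b by auto
  show ?thesis using 1 2 by blast
qed

lemma reindex_D:
  fixes w :: "nat \<times> int \<Rightarrow> 'c::comm_monoid_add"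
  shows "(\<Sum>p\<in>dyadic_index (m+1) (m+n). w p) =
    (\<Sum>i\<in>{0..<2^m::int}. \<Sum>p\<in>dyadic_index 1 n. w (m + fst p, i * 2^(fst p - 1) + snd p))"
proof -
  have "(\<Sum>i\<in>{0..<2^m::int}. \<Sum>p\<in>dyadic_index 1 n. w (m + fst p, i * 2^(fst p - 1) + snd p))
    = (\<Sum>q\<in>{0..<2^m::int} \<times> dyadic_index 1 n. w (phi m q))"
    by (simp add: sum.cartesian_product case_prod_beta phi_def)
  also have "\<dots> = (\<Sum>p\<in>dyadic_index (m+1) (m+n). w p)"
    by (rule sum.reindex_bij_witness[where j = "phi m" and i = "psi m"])
       (use phi_psi_1 phi_psi_2 in blast)+
  finally show ?thesis ..
qed


lemma hs_alt: "hs F v t = (\<Sum>p\<in>F. haar (fst p) (snd p) t *\<^sub>R v p)"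
  unfolding hs_def by (simp add: case_prod_beta)

lemma fun_hs: "(\<lambda>t. \<Sum>(k, j)\<in>F. haar k j t *\<^sub>R T (x (k, j))) = hs F (\<lambda>p. T (x p))"
  unfolding hs_def by simp

lemma sum_sq_alt: "(\<Sum>(k, j)\<in>F. (norm (x (k, j)))\<^sup>2) = (\<Sum>p\<in>F. (norm (x p))\<^sup>2)"
  by (simp add: case_prod_beta)

lemma sq_from_sqrt:
  fixes a b :: real
  assumes "sqrt a \<le> b" "0 \<le> a"
  shows "a \<le> b\<^sup>2"
proof -
  have "0 \<le> sqrt a" using assms(2) by simp
  hence "(sqrt a)\<^sup>2 \<le> b\<^sup>2" using assms(1) by (intro power_mono) auto
  thus ?thesis using assms(2) by simp
qed

lemma F1_le: "(k, j) \<in> dyadic_index 1 n \<Longrightarrow> k \<le> n"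
  unfolding dyadic_index_def by auto

lemma main_step:
  fixes T :: "'a::real_normed_vector \<Rightarrow> 'b::real_normed_vector" and c :: real
  assumes c0: "0 \<le> c"
    and P1: "\<And>y. L2_norm01 (hs (dyadic_index 1 n) (\<lambda>p. T (y p)))
              \<le> c * sqrt (\<Sum>p\<in>dyadic_index 1 n. (norm (y p))\<^sup>2)"
  shows "L2_norm01 (hs (dyadic_index (m+1) (m+n)) (\<lambda>p. T (x p)))
          \<le> c * sqrt (\<Sum>p\<in>dyadic_index (m+1) (m+n). (norm (x p))\<^sup>2)"
proof -
  define F1 where "F1 = dyadic_index 1 n"
  define F2 where "F2 = dyadic_index (m+1) (m+n)"
  define I where "I = {0..<2^m::int}"
  define y where "y i p = x (m + fst p, i * 2^(fst p - 1) + snd p)" for i :: int and p :: "nat \<times> int"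
  define g where "g i = hs F1 (\<lambda>p. T (y i p))" for i
  define G where "G i t = 2 powr (real m / 2) *\<^sub>R g i (2^m * t - real_of_int i)" for i t
  define h where "h i s = (norm (g i s))\<^sup>2" for i s
  have finI: "finite I" unfolding I_def by simp
  have N1: "\<And>k j. (k, j) \<in> F1 \<Longrightarrow> k \<le> n" unfolding F1_def by (rule F1_le)
  have hint: "integrable lborel (h i)" for i
    unfolding h_def g_def by (rule hs_integrable) (rule N1)
  have dec: "hs F2 (\<lambda>p. T (x p)) t = (\<Sum>i\<in>I. G i t)" for t
  proof -
    have "hs F2 (\<lambda>p. T (x p)) t = (\<Sum>i\<in>I. \<Sum>p\<in>F1.
        haar (m + fst p) (i * 2^(fst p - 1) + snd p) t *\<^sub>R T (x (m + fst p, i * 2^(fst p - 1) + snd p)))"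
      unfolding hs_alt F2_def F1_def I_def by (subst reindex_D) simp
    also have "\<dots> = (\<Sum>i\<in>I. G i t)"
    proof (rule sum.cong[OF refl])
      fix i assume i: "i \<in> I"
      have "(\<Sum>p\<in>F1. haar (m + fst p) (i * 2^(fst p - 1) + snd p) t *\<^sub>R T (x (m + fst p, i * 2^(fst p - 1) + snd p)))
          = (\<Sum>p\<in>F1. 2 powr (real m / 2) *\<^sub>R (haar (fst p) (snd p) (2^m * t - real_of_int i) *\<^sub>R T (y i p)))"
      proof (rule sum.cong[OF refl])
        fix p assume p: "p \<in> F1"
        obtain k j where pp: "p = (k, j)" by (cases p) auto
        have k: "1 \<le> k" and j: "1 \<le> j" "j \<le> 2^(k-1)" using p unfolding pp F1_def dyadic_index_def by auto
        have ii: "0 \<le> i" "i < 2^m" using i unfolding I_def by auto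
        show "haar (m + fst p) (i * 2^(fst p - 1) + snd p) t *\<^sub>R T (x (m + fst p, i * 2^(fst p - 1) + snd p))
          = 2 powr (real m / 2) *\<^sub>R (haar (fst p) (snd p) (2^m * t - real_of_int i) *\<^sub>R T (y i p))"
          unfolding pp y_def using haar_scale[OF k ii j, of t] by simp
      qed
      also have "\<dots> = G i t" unfolding G_def g_def hs_alt by (simp add: scaleR_sum_right)
      finally show "(\<Sum>p\<in>F1. haar (m + fst p) (i * 2^(fst p - 1) + snd p) t *\<^sub>R T (x (m + fst p, i * 2^(fst p - 1) + snd p))) = G i t" .
    qed
    finally show ?thesis .
  qed
  have supp: "G i t \<noteq> 0 \<Longrightarrow> 2^m * t - real_of_int i \<in> {0..<1}" for i t
  proof (rule ccontr)
    assume a: "G i t \<noteq> 0" and b: "2^m * t - real_of_int i \<notin> {0..<1}"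
    have "g i (2^m * t - real_of_int i) = 0" unfolding g_def using b by (rule hs_zero)
    thus False using a unfolding G_def by simp
  qed
  have sq: "(norm (hs F2 (\<lambda>p. T (x p)) t))\<^sup>2 = (\<Sum>i\<in>I. (norm (G i t))\<^sup>2)" for t
    unfolding dec
  proof (rule norm_sum_disj[OF finI])
    fix i l assume "G i t \<noteq> 0" "G l t \<noteq> 0"
    then have a: "2^m * t - real_of_int i \<in> {0..<1}" "2^m * t - real_of_int l \<in> {0..<1}" using supp by blast+
    have "real_of_int i < real_of_int l + 1" "real_of_int l < real_of_int i + 1" using a by auto
    hence "i < l + 1" "l < i + 1" by linarith+
    thus "i = l" by linarith
  qed
  have pw: "(2 powr (real m / 2))\<^sup>2 = (2::real)^m"
  proof -
    have e: "real m / 2 + real m / 2 = real m" by simp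
    have "(2 powr (real m / 2))\<^sup>2 = (2::real) powr (real m / 2 + real m / 2)"
      unfolding power2_eq_square by (rule powr_add[symmetric])
    also have "\<dots> = 2 powr (real m)" unfolding e ..
    also have "\<dots> = 2^m" by (simp add: powr_realpow)
    finally show ?thesis .
  qed
  have Gn: "(norm (G i t))\<^sup>2 = 2^m * h i (- real_of_int i + 2^m * t)" for i t
    unfolding G_def h_def by (simp add: power_mult_distrib pw)
  have c2m: "(2::real)^m \<noteq> 0" by simp
  have Gint: "integrable lborel (\<lambda>t. (norm (G i t))\<^sup>2)" for i
  proof -
    have "integrable lborel (\<lambda>t. h i (- real_of_int i + 2^m * t))"
      using lborel_integrable_real_affine_iff[OF c2m, of "h i" "- real_of_int i"] hint by simp
    thus ?thesis unfolding Gn by simp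
  qed
  have Geq: "(\<integral>t. (norm (G i t))\<^sup>2 \<partial>lborel) = (\<integral>s. h i s \<partial>lborel)" for i
  proof -
    have "(\<integral>s. h i s \<partial>lborel) = \<bar>2^m\<bar> *\<^sub>R (\<integral>t. h i (- real_of_int i + 2^m * t) \<partial>lborel)"
      by (rule lborel_integral_real_affine[OF c2m])
    thus ?thesis unfolding Gn by simp
  qed
  have hb: "(\<integral>s. h i s \<partial>lborel) \<le> c\<^sup>2 * (\<Sum>p\<in>F1. (norm (y i p))\<^sup>2)" for i
  proof -
    have "sqrt (\<integral>s. h i s \<partial>lborel) \<le> c * sqrt (\<Sum>p\<in>F1. (norm (y i p))\<^sup>2)"
      using P1[of "y i"] unfolding L2_hs h_def g_def F1_def .
    hence "(\<integral>s. h i s \<partial>lborel) \<le> (c * sqrt (\<Sum>p\<in>F1. (norm (y i p))\<^sup>2))\<^sup>2"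
      by (rule sq_from_sqrt) (simp add: h_def)
    also have "\<dots> = c\<^sup>2 * (\<Sum>p\<in>F1. (norm (y i p))\<^sup>2)"
      by (simp add: power_mult_distrib sum_nonneg)
    finally show ?thesis .
  qed
  have "(\<integral>t. (norm (hs F2 (\<lambda>p. T (x p)) t))\<^sup>2 \<partial>lborel) = (\<integral>t. (\<Sum>i\<in>I. (norm (G i t))\<^sup>2) \<partial>lborel)"
    unfolding sq ..
  also have "\<dots> = (\<Sum>i\<in>I. (\<integral>t. (norm (G i t))\<^sup>2 \<partial>lborel))"
    by (rule Bochner_Integration.integral_sum) (rule Gint)
  also have "\<dots> = (\<Sum>i\<in>I. (\<integral>s. h i s \<partial>lborel))" using Geq by simp
  also have "\<dots> \<le> (\<Sum>i\<in>I. c\<^sup>2 * (\<Sum>p\<in>F1. (norm (y i p))\<^sup>2))" by (rule sum_mono) (rule hb)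
  also have "\<dots> = c\<^sup>2 * (\<Sum>p\<in>F2. (norm (x p))\<^sup>2)"
    unfolding sum_distrib_left[symmetric] F2_def F1_def I_def y_def
    by (subst reindex_D) simp
  finally have fin: "(\<integral>t. (norm (hs F2 (\<lambda>p. T (x p)) t))\<^sup>2 \<partial>lborel) \<le> c\<^sup>2 * (\<Sum>p\<in>F2. (norm (x p))\<^sup>2)" .
  have "L2_norm01 (hs F2 (\<lambda>p. T (x p))) \<le> sqrt (c\<^sup>2 * (\<Sum>p\<in>F2. (norm (x p))\<^sup>2))"
    unfolding L2_hs using fin by (rule real_sqrt_le_mono)
  also have "\<dots> = c * sqrt (\<Sum>p\<in>F2. (norm (x p))\<^sup>2)" using c0 by (simp add: real_sqrt_mult)
  finally show ?thesis unfolding F2_def .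
qed


lemma nonempty_S:
  fixes T :: "'a::real_normed_vector \<Rightarrow> 'b::real_normed_vector"
  assumes T: "bounded_linear T" and N: "\<And>k j. (k, j) \<in> F \<Longrightarrow> k \<le> N" and finF: "finite F"
  shows "\<exists>c\<ge>0. \<forall>x. L2_norm01 (hs F (\<lambda>p. T (x p))) \<le> c * sqrt (\<Sum>p\<in>F. (norm (x p))\<^sup>2)"
proof -
  obtain K where K: "K > 0" "\<And>x. norm (T x) \<le> norm x * K"
    using bounded_linear.pos_bounded[OF T] by blast
  define A where "A = (\<Sum>p\<in>F. 2 powr ((real (fst p) - 1) / 2))"
  have A0: "0 \<le> A" unfolding A_def by (rule sum_nonneg) simp
  define c where "c = K * A"
  have c0: "0 \<le> c" unfolding c_def using K A0 by simp
  show ?thesis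
  proof (intro exI[of _ c] conjI allI c0)
    fix x :: "nat \<times> int \<Rightarrow> 'a"
    define Q where "Q = sqrt (\<Sum>p\<in>F. (norm (x p))\<^sup>2)"
    have Q0: "0 \<le> Q" unfolding Q_def by (simp add: sum_nonneg)
    have xq: "norm (x p) \<le> Q" if "p \<in> F" for p
    proof -
      have "(norm (x p))\<^sup>2 \<le> (\<Sum>p\<in>F. (norm (x p))\<^sup>2)"
        by (rule member_le_sum[OF that _ finF]) simp
      hence "sqrt ((norm (x p))\<^sup>2) \<le> Q" unfolding Q_def by (rule real_sqrt_le_mono)
      thus ?thesis by simp
    qed
    have Cb: "(\<Sum>(k, j)\<in>F. 2 powr ((real k - 1) / 2) * norm (T (x (k, j)))) \<le> c * Q"
    proof -
      have "(\<Sum>(k, j)\<in>F. 2 powr ((real k - 1) / 2) * norm (T (x (k, j))))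
          = (\<Sum>p\<in>F. 2 powr ((real (fst p) - 1) / 2) * norm (T (x p)))" by (simp add: case_prod_beta)
      also have "\<dots> \<le> (\<Sum>p\<in>F. 2 powr ((real (fst p) - 1) / 2) * (K * Q))"
      proof (rule sum_mono)
        fix p assume p: "p \<in> F"
        have "norm (T (x p)) \<le> norm (x p) * K" by (rule K(2))
        also have "\<dots> \<le> Q * K" using xq[OF p] K by (intro mult_right_mono) auto
        finally show "2 powr ((real (fst p) - 1) / 2) * norm (T (x p)) \<le> 2 powr ((real (fst p) - 1) / 2) * (K * Q)"
          by (intro mult_left_mono) (auto simp: mult.commute)
      qed
      also have "\<dots> = c * Q" unfolding c_def A_def sum_distrib_left sum_distrib_right by (simp add: algebra_simps)
      finally show ?thesis .
    qed
    have pb: "(norm (hs F (\<lambda>p. T (x p)) t))\<^sup>2 \<le> indicator {0..<1::real} t *\<^sub>R (c * Q)\<^sup>2" for t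
    proof -
      have b: "norm (hs F (\<lambda>p. T (x p)) t) \<le> indicator {0..<1} t * (c * Q)"
      proof -
        have "indicator {0..<1} t * (\<Sum>(k, j)\<in>F. 2 powr ((real k - 1) / 2) * norm (T (x (k, j))))
            \<le> indicator {0..<1::real} t * (c * Q)" by (rule mult_left_mono[OF Cb]) simp
        thus ?thesis by (rule order_trans[OF hs_bound])
      qed
      have "(norm (hs F (\<lambda>p. T (x p)) t))\<^sup>2 \<le> (indicator {0..<1} t * (c * Q))\<^sup>2"
        by (rule power_mono[OF b]) simp
      also have "\<dots> = indicator {0..<1::real} t *\<^sub>R (c * Q)\<^sup>2" by (simp add: indicator_def power2_eq_square)
      finally show ?thesis .
    qed
    have I: "integrable lborel (\<lambda>t. indicator {0..<1::real} t *\<^sub>R (c * Q)\<^sup>2)"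
      by (rule integrable_indicator) auto
    have "(\<integral>t. (norm (hs F (\<lambda>p. T (x p)) t))\<^sup>2 \<partial>lborel) \<le> (\<integral>t. indicator {0..<1::real} t *\<^sub>R (c * Q)\<^sup>2 \<partial>lborel)"
      by (rule integral_mono'[OF I pb]) simp
    also have "\<dots> = (c * Q)\<^sup>2" by simp
    finally have "L2_norm01 (hs F (\<lambda>p. T (x p))) \<le> sqrt ((c * Q)\<^sup>2)"
      unfolding L2_hs by (rule real_sqrt_le_mono)
    also have "\<dots> = c * Q" using c0 Q0 by simp
    finally show "L2_norm01 (hs F (\<lambda>p. T (x p))) \<le> c * sqrt (\<Sum>p\<in>F. (norm (x p))\<^sup>2)" unfolding Q_def .
  qed
qed

theorem corollary3p2:
  fixes m n :: nat and T :: "'a::banach \<Rightarrow> 'b::banach"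
  assumes "bounded_linear T"
  shows "haar_tau T (dyadic_index (m + 1) (m + n)) \<le> haar_tau T (dyadic_index 1 n)"
proof -
  define S where "S F = {c. c \<ge> 0 \<and> (\<forall>x :: nat \<times> int \<Rightarrow> 'a.
        L2_norm01 (hs F (\<lambda>p. T (x p))) \<le> c * sqrt (\<Sum>p\<in>F. (norm (x p))\<^sup>2))}" for F
  have tau: "haar_tau T F = Inf (S F)" for F
    unfolding haar_tau_def S_def fun_hs sum_sq_alt ..
  have ex: "\<exists>c\<ge>0. \<forall>x. L2_norm01 (hs (dyadic_index 1 n) (\<lambda>p. T (x p)))
      \<le> c * sqrt (\<Sum>p\<in>dyadic_index 1 n. (norm (x p))\<^sup>2)"
    by (rule nonempty_S[where N=n, OF assms]) (erule F1_le, rule dyadic_index_finite)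
  then obtain c0 where "c0 \<in> S (dyadic_index 1 n)" unfolding S_def by blast
  hence ne: "S (dyadic_index 1 n) \<noteq> {}" by blast
  have bdd: "bdd_below (S (dyadic_index (m + 1) (m + n)))"
    unfolding S_def by (rule bdd_belowI[of _ 0]) blast
  have sub: "S (dyadic_index 1 n) \<subseteq> S (dyadic_index (m + 1) (m + n))"
  proof
    fix c assume "c \<in> S (dyadic_index 1 n)"
    hence c0: "0 \<le> c" and P1: "\<And>y. L2_norm01 (hs (dyadic_index 1 n) (\<lambda>p. T (y p)))
              \<le> c * sqrt (\<Sum>p\<in>dyadic_index 1 n. (norm (y p))\<^sup>2)" unfolding S_def by auto
    have "\<forall>x. L2_norm01 (hs (dyadic_index (m+1) (m+n)) (\<lambda>p. T (x p)))
          \<le> c * sqrt (\<Sum>p\<in>dyadic_index (m+1) (m+n). (norm (x p))\<^sup>2)"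
    proof
      fix x :: "nat \<times> int \<Rightarrow> 'a"
      show "L2_norm01 (hs (dyadic_index (m+1) (m+n)) (\<lambda>p. T (x p)))
          \<le> c * sqrt (\<Sum>p\<in>dyadic_index (m+1) (m+n). (norm (x p))\<^sup>2)"
        by (rule main_step[OF c0 P1])
    qed
    thus "c \<in> S (dyadic_index (m + 1) (m + n))"
      unfolding S_def using c0 by blast
  qed
  show ?thesis unfolding tau by (rule cInf_superset_mono[OF ne bdd sub])
qed

end
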